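(* Let $R\subset S$ be an FCP ring extension with Loewy series $\{S_i\}_{i=0}^n$, and let $T\in[R,S]$, $T\neq R,S$, be such that $\mathrm{Supp}_R(T/R)\cap\mathrm{Supp}_R(S/T)=\emptyset$. Then: (1) $T$ has a unique complement $U\in[R,S]$, i.e. a unique $U$ with $T\cap U=R$ and $TU=S$. (2) Let $\{T_i\}_{i=0}^m$ and $\{U_i\}_{i=0}^r$ be the Loewy series of $R\subseteq T$ and $R\subseteq U$ respectively. Then $S_i=T_iU_i$ for each $i\in\{0,\ldots,n\}$, and $n=\pounds[R,S]=\sup(\pounds[R,T],\pounds[R,U])=\sup(m,r)$.
   Context: All rings are commutative with identity. $[R,S]$ is the lattice of $R$-subalgebras of $S$ (meet = intersection, join = product). FCP: every chain in $[R,S]$ is finite. $T\subset U$ minimal means $[T,U]=\{T,U\}$; atoms of $[A,B]$ are $C$ with $A\subset C$ minimal; the socle $\mathcal S[A,B]$ is the product of all atoms of $[A,B]$. The Loewy series of $A\subseteq B$: $S_0=A$, $S_{i+1}=\mathcal S[S_i,B]$ while $S_i\neq B$, and $\pounds[A,B]$ is the least $n$ with $S_n=B$; by convention the terms of a Loewy series beyond its length are all equal to its top (e.g. $T_i=T$ for $i\geq m$ and $U_i=U$ for $i\geq r$). $\mathrm{Supp}_R(E)$ is the set of primes $P$ of $R$ with $E_P\neq 0$. *)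

theory Defs
  imports Main
begin

text \<open>Rings are subsets of an ambient commutative ring (type class comm_ring_1).
  A ring extension R \<subseteq> S is a pair of subrings of the ambient type.\<close>

definition subring :: "'a::comm_ring_1 set \<Rightarrow> bool" where
  "subring A \<longleftrightarrow> 0 \<in> A \<and> 1 \<in> A \<and> (\<forall>x\<in>A. \<forall>y\<in>A. x + y \<in> A \<and> x * y \<in> A) \<and> (\<forall>x\<in>A. - x \<in> A)"

definition interval :: "'a::comm_ring_1 set \<Rightarrow> 'a set \<Rightarrow> 'a set set" where
  "interval A B = {C. subring C \<and> A \<subseteq> C \<and> C \<subseteq> B}"

definition ring_gen :: "'a::comm_ring_1 set \<Rightarrow> 'a set" where
  "ring_gen X = \<Inter>{C. subring C \<and> X \<subseteq> C}"

definition ringprod :: "'a::comm_ring_1 set \<Rightarrow> 'a set \<Rightarrow> 'a set" where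
  "ringprod A B = ring_gen (A \<union> B)"

definition FCP :: "'a::comm_ring_1 set \<Rightarrow> 'a set \<Rightarrow> bool" where
  "FCP A B \<longleftrightarrow> (\<forall>C \<subseteq> interval A B. (\<forall>x\<in>C. \<forall>y\<in>C. x \<subseteq> y \<or> y \<subseteq> x) \<longrightarrow> finite C)"

definition minimal_ext :: "'a::comm_ring_1 set \<Rightarrow> 'a set \<Rightarrow> bool" where
  "minimal_ext A B \<longleftrightarrow> A \<subset> B \<and> interval A B = {A, B}"

definition atoms :: "'a::comm_ring_1 set \<Rightarrow> 'a set \<Rightarrow> 'a set set" where
  "atoms A B = {C \<in> interval A B. minimal_ext A C}"

definition socle :: "'a::comm_ring_1 set \<Rightarrow> 'a set \<Rightarrow> 'a set" where
  "socle A B = ring_gen (A \<union> \<Union>(atoms A B))"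

text \<open>Loewy series; terms beyond the length are equal to the top.\<close>
fun loewy :: "'a::comm_ring_1 set \<Rightarrow> 'a set \<Rightarrow> nat \<Rightarrow> 'a set" where
  "loewy A B 0 = A"
| "loewy A B (Suc i) = (if loewy A B i = B then B else socle (loewy A B i) B)"

definition loewy_length :: "'a::comm_ring_1 set \<Rightarrow> 'a set \<Rightarrow> nat" where
  "loewy_length A B = (LEAST n. loewy A B n = B)"

definition prime_ideal_of :: "'a::comm_ring_1 set \<Rightarrow> 'a set \<Rightarrow> bool" where
  "prime_ideal_of R P \<longleftrightarrow> P \<subseteq> R \<and> P \<noteq> R \<and> 0 \<in> P
     \<and> (\<forall>x\<in>P. \<forall>y\<in>P. x + y \<in> P) \<and> (\<forall>r\<in>R. \<forall>x\<in>P. r * x \<in> P)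
     \<and> (\<forall>a\<in>R. \<forall>b\<in>R. a * b \<in> P \<longrightarrow> a \<in> P \<or> b \<in> P)"

text \<open>Supp_R(M/N) for R-submodules N \<subseteq> M of the ambient ring:
  (M/N)_P \<noteq> 0 iff some class x+N does not vanish in the localization,
  i.e. no s \<in> R - P has s*x \<in> N.\<close>
definition supp_quot :: "'a::comm_ring_1 set \<Rightarrow> 'a set \<Rightarrow> 'a set \<Rightarrow> 'a set set" where
  "supp_quot R M N = {P. prime_ideal_of R P \<and> (\<exists>x\<in>M. \<forall>s\<in>R - P. s * x \<notin> N)}"

end

theory Submission
  imports Defs
begin

lemma sr_0: "subring C \<Longrightarrow> 0 \<in> C" by (simp add: subring_def)
lemma sr_1: "subring C \<Longrightarrow> 1 \<in> C" by (simp add: subring_def)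
lemma sr_add: "subring C \<Longrightarrow> x \<in> C \<Longrightarrow> y \<in> C \<Longrightarrow> x + y \<in> C" by (simp add: subring_def)
lemma sr_mult: "subring C \<Longrightarrow> x \<in> C \<Longrightarrow> y \<in> C \<Longrightarrow> x * y \<in> C" by (simp add: subring_def)
lemma sr_neg: "subring C \<Longrightarrow> x \<in> C \<Longrightarrow> - x \<in> C" by (simp add: subring_def)
lemma sr_diff: "subring C \<Longrightarrow> x \<in> C \<Longrightarrow> y \<in> C \<Longrightarrow> x - y \<in> C"
  using sr_add sr_neg by (metis diff_conv_add_uminus)
lemma sr_pow: "subring C \<Longrightarrow> x \<in> C \<Longrightarrow> x ^ n \<in> C"
  by (induction n) (auto intro: sr_1 sr_mult)

lemma sr_Int: "subring A \<Longrightarrow> subring B \<Longrightarrow> subring (A \<inter> B)"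
  by (simp add: subring_def)

lemma subring_ring_gen: "subring (ring_gen X)"
  unfolding ring_gen_def subring_def by auto
lemma ring_gen_sub: "X \<subseteq> ring_gen X"
  unfolding ring_gen_def by auto
lemma ring_gen_least: "subring C \<Longrightarrow> X \<subseteq> C \<Longrightarrow> ring_gen X \<subseteq> C"
  unfolding ring_gen_def by auto
lemma ring_gen_mono: "X \<subseteq> Y \<Longrightarrow> ring_gen X \<subseteq> ring_gen Y"
  unfolding ring_gen_def by auto
lemma ring_gen_id: "subring C \<Longrightarrow> ring_gen C = C"
  by (meson ring_gen_least ring_gen_sub subset_antisym subset_refl)

lemma subring_ringprod: "subring (ringprod A B)"
  by (simp add: ringprod_def subring_ring_gen)
lemma ringprod_sub1: "A \<subseteq> ringprod A B" unfolding ringprod_def using ring_gen_sub by blast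
lemma ringprod_sub2: "B \<subseteq> ringprod A B" unfolding ringprod_def using ring_gen_sub by blast
lemma ringprod_least: "subring C \<Longrightarrow> A \<subseteq> C \<Longrightarrow> B \<subseteq> C \<Longrightarrow> ringprod A B \<subseteq> C"
  unfolding ringprod_def by (simp add: ring_gen_least)
lemma ringprod_mono: "A \<subseteq> A' \<Longrightarrow> B \<subseteq> B' \<Longrightarrow> ringprod A B \<subseteq> ringprod A' B'"
  unfolding ringprod_def by (rule ring_gen_mono) blast
lemma ringprod_comm: "ringprod A B = ringprod B A"
  unfolding ringprod_def by (simp add: Un_commute)
lemma ringprod_self: "subring A \<Longrightarrow> ringprod A A = A"
  unfolding ringprod_def by (simp add: ring_gen_id)

lemma interval_iff: "C \<in> interval A B \<longleftrightarrow> subring C \<and> A \<subseteq> C \<and> C \<subseteq> B"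
  by (simp add: interval_def)

lemma mult_sat_subring:
  assumes "subring C" "c \<in> C"
  shows "subring {w. \<exists>n. c ^ n * w \<in> C}"
proof -
  have add: "\<exists>n. c ^ n * (x + y) \<in> C" if "c ^ n * x \<in> C" "c ^ m * y \<in> C" for x y n m
  proof -
    have "c ^ (n + m) * (x + y) = c ^ m * (c ^ n * x) + c ^ n * (c ^ m * y)"
      by (simp add: power_add algebra_simps)
    also have "\<dots> \<in> C" using that assms by (simp add: sr_add sr_mult sr_pow)
    finally show ?thesis by blast
  qed
  have mul: "\<exists>n. c ^ n * (x * y) \<in> C" if "c ^ n * x \<in> C" "c ^ m * y \<in> C" for x y n m
  proof -
    have "c ^ (n + m) * (x * y) = (c ^ n * x) * (c ^ m * y)"
      by (simp add: power_add algebra_simps)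
    also have "\<dots> \<in> C" using that assms by (simp add: sr_mult)
    finally show ?thesis by blast
  qed
  have neg: "\<exists>n. c ^ n * (- x) \<in> C" if "c ^ n * x \<in> C" for x n
    using sr_neg[OF assms(1) that] by (metis mult_minus_right)
  show ?thesis unfolding subring_def
    using add mul neg assms sr_0[OF assms(1)] sr_1[OF assms(1)]
    by (auto intro: exI[of _ 0])
qed

lemma pow_comax1:
  assumes "subring R" "p \<in> R" "q \<in> R" "p + q = 1"
  shows "\<exists>w\<in>R. p ^ m + q * w = 1"
proof (induction m)
  case 0 show ?case by (intro bexI[of _ 0]) (simp_all add: sr_0 assms)
next
  case (Suc m)
  then obtain w where w: "w \<in> R" "p ^ m + q * w = 1" by blast
  have "p ^ Suc m + q * (1 + p * w) = p * (p ^ m + q * w) + q" by (simp add: algebra_simps)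
  also have "\<dots> = 1" using w assms by simp
  finally show ?case using assms w by (meson sr_1 sr_add sr_mult)
qed

lemma pow_comax:
  assumes "subring R" "a \<in> R" "b \<in> R" "a + b = 1"
  shows "\<exists>u\<in>R. \<exists>v\<in>R. u * a ^ m + v * b ^ n = 1"
proof -
  obtain w where w: "w \<in> R" "a ^ m + b * w = 1" using pow_comax1[OF assms] by blast
  have "b * w \<in> R" "a ^ m \<in> R" using assms w by (auto simp: sr_mult sr_pow)
  moreover have "b * w + a ^ m = 1" using w by (simp add: add.commute)
  ultimately obtain z where z: "z \<in> R" "(b * w) ^ n + a ^ m * z = 1"
    using pow_comax1[OF assms(1)] by blast
  have "z * a ^ m + w ^ n * b ^ n = 1" using z(2) by (simp add: algebra_simps power_mult_distrib)
  thus ?thesis using z w assms by (meson sr_pow)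
qed

lemma split_elem:
  assumes "subring R" "a \<in> R" "b \<in> R" "a + b = 1" "subring C" "R \<subseteq> C"
    "a ^ m * w \<in> C" "b ^ n * w \<in> C"
  shows "w \<in> C"
proof -
  obtain u v where uv: "u \<in> R" "v \<in> R" "u * a ^ m + v * b ^ n = 1"
    using pow_comax[OF assms(1-4)] by blast
  have "w = u * (a ^ m * w) + v * (b ^ n * w)"
    by (metis (no_types, lifting) uv(3) mult.assoc distrib_right mult_1)
  also have "\<dots> \<in> C" using assms uv by (meson sr_add sr_mult subsetD)
  finally show ?thesis .
qed

lemma fcp_no_chain:
  fixes f :: "nat \<Rightarrow> 'a::comm_ring_1 set"
  assumes "FCP A B" "range f \<subseteq> interval A B" "inj f"
    "\<forall>x\<in>range f. \<forall>y\<in>range f. x \<subseteq> y \<or> y \<subseteq> x"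
  shows False
proof -
  have "finite (range f)" using assms(1)[unfolded FCP_def, THEN spec[of _ "range f"], THEN mp, OF assms(2), THEN mp, OF assms(4)] .
  hence "finite (UNIV :: nat set)" by (rule finite_imageD[OF _ assms(3)])
  thus False by simp
qed

lemma fcp_no_inc:
  assumes "FCP A B" "\<And>i. f i \<in> interval A B" "\<And>i. f i \<subset> f (Suc i)"
  shows False
proof -
  have le: "i \<le> j \<Longrightarrow> f i \<subseteq> f j" for i j
    using lift_Suc_mono_le[of f i j] assms(3) by (meson psubset_imp_subset)
  have lt: "i < j \<Longrightarrow> f i \<subset> f j" for i j
    using lift_Suc_mono_less[of f i j] assms(3) by simp
  have "inj f"
  proof (rule injI)
    fix x y assume "f x = f y"
    thus "x = y" using lt[of x y] lt[of y x] by (metis less_linear less_irrefl)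
  qed
  moreover have "\<forall>x\<in>range f. \<forall>y\<in>range f. x \<subseteq> y \<or> y \<subseteq> x"
  proof (intro ballI)
    fix x y assume "x \<in> range f" "y \<in> range f"
    then obtain i j where "x = f i" "y = f j" by blast
    thus "x \<subseteq> y \<or> y \<subseteq> x" using le[of i j] le[of j i] nat_le_linear[of i j] by blast
  qed
  ultimately show False using fcp_no_chain[OF assms(1)] assms(2) by blast
qed

lemma fcp_no_dec:
  assumes "FCP A B" "\<And>i. f i \<in> interval A B" "\<And>i. f (Suc i) \<subset> f i"
  shows False
proof -
  have le: "i \<le> j \<Longrightarrow> f j \<subseteq> f i" for i j
    using lift_Suc_antimono_le[of f i j] assms(3) by (meson psubset_imp_subset)
  have lt: "i < j \<Longrightarrow> f j \<subset> f i" for i j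
  proof -
    assume "i < j" hence "Suc i \<le> j" by simp
    hence "f j \<subseteq> f (Suc i)" using le by blast
    thus ?thesis using assms(3)[of i] by blast
  qed
  have "inj f"
  proof (rule injI)
    fix x y assume "f x = f y"
    thus "x = y" using lt[of x y] lt[of y x] by (metis less_linear less_irrefl)
  qed
  moreover have "\<forall>x\<in>range f. \<forall>y\<in>range f. x \<subseteq> y \<or> y \<subseteq> x"
  proof (intro ballI)
    fix x y assume "x \<in> range f" "y \<in> range f"
    then obtain i j where "x = f i" "y = f j" by blast
    thus "x \<subseteq> y \<or> y \<subseteq> x" using le[of i j] le[of j i] nat_le_linear[of i j] by blast
  qed
  ultimately show False using fcp_no_chain[OF assms(1)] assms(2) by blast
qed

lemma fcp_wf_sub:
  assumes "FCP A B"
  shows "wf {(X, Y). X \<in> interval A B \<and> Y \<in> interval A B \<and> X \<subset> Y}"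
  unfolding wf_iff_no_infinite_down_chain
proof
  assume "\<exists>f. \<forall>i. (f (Suc i), f i) \<in> {(X, Y). X \<in> interval A B \<and> Y \<in> interval A B \<and> X \<subset> Y}"
  then obtain f where "\<And>i. f i \<in> interval A B" "\<And>i. f (Suc i) \<subset> f i" by blast
  thus False using fcp_no_dec[OF assms] by blast
qed

lemma fcp_wf_sup:
  assumes "FCP A B"
  shows "wf {(X, Y). X \<in> interval A B \<and> Y \<in> interval A B \<and> Y \<subset> X}"
  unfolding wf_iff_no_infinite_down_chain
proof
  assume "\<exists>f. \<forall>i. (f (Suc i), f i) \<in> {(X, Y). X \<in> interval A B \<and> Y \<in> interval A B \<and> Y \<subset> X}"
  then obtain f where "\<And>i. f i \<in> interval A B" "\<And>i. f i \<subset> f (Suc i)" by blast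
  thus False using fcp_no_inc[OF assms] by blast
qed

lemma fcp_sub:
  assumes "FCP A B" "interval C D \<subseteq> interval A B"
  shows "FCP C D"
  unfolding FCP_def
proof (intro allI impI)
  fix X assume X: "X \<subseteq> interval C D" "\<forall>x\<in>X. \<forall>y\<in>X. x \<subseteq> y \<or> y \<subseteq> x"
  have "X \<subseteq> interval A B" using X(1) assms(2) by (rule subset_trans)
  thus "finite X" using assms(1)[unfolded FCP_def, THEN spec[of _ X], THEN mp, THEN mp] X(2) by blast
qed

lemma atom_exists:
  assumes "FCP A B" "X \<in> interval A B" "X \<noteq> B" "subring B"
  shows "\<exists>C. C \<in> atoms X B"
proof -
  define r where "r = {(X, Y). X \<in> interval A B \<and> Y \<in> interval A B \<and> X \<subset> Y}"
  define Q where "Q = {C \<in> interval X B. C \<noteq> X}"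
  have XB: "X \<subseteq> B" "subring X" "A \<subseteq> X" using assms(2) by (auto simp: interval_iff)
  have wf: "wf r" unfolding r_def by (rule fcp_wf_sub[OF assms(1)])
  have "B \<in> Q" unfolding Q_def using assms(3,4) XB(1) by (simp add: interval_iff)
  then obtain C where C: "C \<in> Q" and min: "\<And>D. (D, C) \<in> r \<Longrightarrow> D \<notin> Q"
    using wfE_min[OF wf] by metis
  have C1: "subring C" "X \<subseteq> C" "C \<subseteq> B" "C \<noteq> X" using C unfolding Q_def by (auto simp: interval_iff)
  have CA: "C \<in> interval A B" using C1 XB(3) by (simp add: interval_iff)
  have "minimal_ext X C"
    unfolding minimal_ext_def
  proof
    show "X \<subset> C" using C1 by blast
    show "interval X C = {X, C}"
    proof
      show "interval X C \<subseteq> {X, C}"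
      proof
        fix D assume D: "D \<in> interval X C"
        have D1: "subring D" "X \<subseteq> D" "D \<subseteq> C" using D by (auto simp: interval_iff)
        show "D \<in> {X, C}"
        proof (rule ccontr)
          assume "D \<notin> {X, C}"
          hence ne: "D \<noteq> X" "D \<noteq> C" by auto
          have DB: "D \<subseteq> B" using D1(3) C1(3) by (rule subset_trans)
          have "D \<in> Q" unfolding Q_def using D1 DB ne by (simp add: interval_iff)
          moreover have "D \<in> interval A B" using D1 DB XB(3) by (simp add: interval_iff)
          hence "(D, C) \<in> r" unfolding r_def using CA D1(3) ne(2) by blast
          ultimately show False using min by blast
        qed
      qed
      show "{X, C} \<subseteq> interval X C" using XB(2) C1 by (simp add: interval_iff)
    qed
  qed
  moreover have "C \<in> interval X B" using C unfolding Q_def by blast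
  ultimately show ?thesis unfolding atoms_def by blast
qed

lemma ring_gen_interval:
  assumes "A \<subseteq> D" "D \<subseteq> B" "X \<subseteq> B" "subring B"
  shows "ring_gen (D \<union> X) \<in> interval A B"
proof -
  have "A \<subseteq> ring_gen (D \<union> X)" using assms(1) ring_gen_sub[of "D \<union> X"] by blast
  moreover have "ring_gen (D \<union> X) \<subseteq> B" using assms(2-4) by (intro ring_gen_least) auto
  ultimately show ?thesis using subring_ring_gen by (simp add: interval_iff)
qed

lemma fcp_fin_gen:
  assumes "FCP A B" "D \<in> interval A B" "C \<in> interval D B" "subring B"
  shows "\<exists>X. finite X \<and> X \<subseteq> C \<and> ring_gen (D \<union> X) = C"
proof -
  define r where "r = {(X, Y). X \<in> interval A B \<and> Y \<in> interval A B \<and> Y \<subset> X}"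
  define Q where "Q = {ring_gen (D \<union> X) | X. finite X \<and> X \<subseteq> C}"
  have wf: "wf r" unfolding r_def by (rule fcp_wf_sup[OF assms(1)])
  have DC: "A \<subseteq> D" "D \<subseteq> C" "C \<subseteq> B" "subring C" using assms by (auto simp: interval_iff)
  have "ring_gen (D \<union> {}) \<in> Q" unfolding Q_def by (intro CollectI exI[of _ "{}"]) simp
  then obtain G where G: "G \<in> Q" and min: "\<And>Y. (Y, G) \<in> r \<Longrightarrow> Y \<notin> Q"
    using wfE_min[OF wf] by metis
  then obtain X0 where X0: "G = ring_gen (D \<union> X0)" "finite X0" "X0 \<subseteq> C" unfolding Q_def by blast
  have GC: "G \<subseteq> C" unfolding X0(1) using X0(3) DC(2,4) by (intro ring_gen_least) auto
  show ?thesis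
  proof (cases "G = C")
    case True thus ?thesis using X0(2,3) X0(1)[symmetric] by (intro exI[of _ X0]) simp
  next
    case False
    then obtain t where t: "t \<in> C" "t \<notin> G" using GC by blast
    define Y where "Y = ring_gen (D \<union> insert t X0)"
    have YQ: "Y \<in> Q" unfolding Q_def Y_def using X0(2,3) t(1) by (intro CollectI exI[of _ "insert t X0"]) simp
    have "G \<subseteq> Y" unfolding X0(1) Y_def by (rule ring_gen_mono) blast
    moreover have "t \<in> Y" unfolding Y_def using ring_gen_sub[of "D \<union> insert t X0"] by blast
    ultimately have GY: "G \<subset> Y" using t(2) by blast
    have XB: "X0 \<subseteq> B" "insert t X0 \<subseteq> B" using X0(3) t(1) DC(3) by auto
    have DB: "D \<subseteq> B" using DC by blast
    have "G \<in> interval A B" unfolding X0(1) by (rule ring_gen_interval[OF DC(1) DB XB(1) assms(4)])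
    moreover have "Y \<in> interval A B" unfolding Y_def by (rule ring_gen_interval[OF DC(1) DB XB(2) assms(4)])
    ultimately have "(Y, G) \<in> r" unfolding r_def using GY by blast
    hence False using min YQ by blast
    thus ?thesis ..
  qed
qed

lemma socle_interval:
  assumes "subring X" "subring B" "X \<subseteq> B"
  shows "socle X B \<in> interval X B"
proof -
  have at: "\<Union>(atoms X B) \<subseteq> B" unfolding atoms_def interval_def by blast
  have "X \<subseteq> socle X B" unfolding socle_def using ring_gen_sub[of "X \<union> \<Union>(atoms X B)"] by blast
  moreover have "socle X B \<subseteq> B" unfolding socle_def using assms(2,3) at by (intro ring_gen_least) auto
  ultimately show ?thesis unfolding socle_def using subring_ring_gen by (simp add: interval_iff)
qed

lemma socle_self: "subring X \<Longrightarrow> socle X X = X"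
proof -
  assume X: "subring X"
  have "atoms X X = {}" unfolding atoms_def minimal_ext_def interval_def by blast
  thus ?thesis unfolding socle_def using ring_gen_id[OF X] by simp
qed

lemma atom_sub_socle: "C \<in> atoms X B \<Longrightarrow> C \<subseteq> socle X B"
  unfolding socle_def using ring_gen_sub[of "X \<union> \<Union>(atoms X B)"] by blast

lemma loewy_interval:
  assumes "subring A" "subring B" "A \<subseteq> B"
  shows "loewy A B i \<in> interval A B"
proof (induction i)
  case 0 thus ?case using assms by (simp add: interval_iff)
next
  case (Suc i)
  show ?case
  proof (cases "loewy A B i = B")
    case True thus ?thesis using assms by (simp add: interval_iff)
  next
    case False
    have "socle (loewy A B i) B \<in> interval (loewy A B i) B"
      using Suc assms by (intro socle_interval) (auto simp: interval_iff)
    thus ?thesis using False Suc by (auto simp: interval_iff)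
  qed
qed

lemma loewy_Suc':
  assumes "subring A" "subring B" "A \<subseteq> B"
  shows "loewy A B (Suc i) = socle (loewy A B i) B"
  using socle_self[OF assms(2)] by simp

lemma loewy_top_mono:
  assumes "loewy A B k = B" "k \<le> k'"
  shows "loewy A B k' = B"
  using assms(2,1) by (induction k' rule: dec_induct) auto

lemma loewy_reaches:
  assumes "FCP A B" "subring A" "subring B" "A \<subseteq> B"
  shows "\<exists>k. loewy A B k = B"
proof (rule ccontr)
  assume ne: "\<not> (\<exists>k. loewy A B k = B)"
  have "loewy A B i \<subset> loewy A B (Suc i)" for i
  proof -
    have I: "loewy A B i \<in> interval A B" using loewy_interval[OF assms(2-4)] .
    have ne1: "loewy A B i \<noteq> B" using ne by blast
    obtain C where C: "C \<in> atoms (loewy A B i) B" using atom_exists[OF assms(1) I ne1 assms(3)] by blast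
      have "loewy A B i \<subset> C" using C unfolding atoms_def minimal_ext_def by blast
    moreover have "C \<subseteq> loewy A B (Suc i)" using C atom_sub_socle ne1 by simp
    ultimately show ?thesis by blast
  qed
  thus False using fcp_no_inc[OF assms(1) loewy_interval[OF assms(2-4)]] by blast
qed

lemma exists_prime:
  assumes R: "subring R" and I: "I \<subseteq> R" "0 \<in> I" "\<forall>x\<in>I. \<forall>y\<in>I. x + y \<in> I"
    "\<forall>r\<in>R. \<forall>x\<in>I. r * x \<in> I" "1 \<notin> I"
  shows "\<exists>P. prime_ideal_of R P \<and> I \<subseteq> P"
proof -
  define Id where "Id = {J. J \<subseteq> R \<and> I \<subseteq> J \<and> (\<forall>x\<in>J. \<forall>y\<in>J. x + y \<in> J)
      \<and> (\<forall>r\<in>R. \<forall>x\<in>J. r * x \<in> J) \<and> 1 \<notin> J}"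
  have IId: "I \<in> Id" unfolding Id_def using I by blast
  have "\<forall>C\<in>chains Id. \<exists>U\<in>Id. \<forall>X\<in>C. X \<subseteq> U"
  proof
    fix C assume C: "C \<in> chains Id"
    show "\<exists>U\<in>Id. \<forall>X\<in>C. X \<subseteq> U"
    proof (cases "C = {}")
      case True thus ?thesis using IId by blast
    next
      case False
      have CI: "C \<subseteq> Id" and ch: "\<And>A B. A \<in> C \<Longrightarrow> B \<in> C \<Longrightarrow> A \<subseteq> B \<or> B \<subseteq> A"
        using C unfolding chains_def chain_subset_def by auto
      have mem: "\<And>J. J \<in> C \<Longrightarrow> J \<subseteq> R \<and> I \<subseteq> J \<and> (\<forall>x\<in>J. \<forall>y\<in>J. x + y \<in> J)
          \<and> (\<forall>r\<in>R. \<forall>x\<in>J. r * x \<in> J) \<and> 1 \<notin> J"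
        using CI unfolding Id_def by blast
      obtain J0 where J0: "J0 \<in> C" using False by blast
      have "\<Union>C \<in> Id" unfolding Id_def
      proof (intro CollectI conjI)
        show "\<Union>C \<subseteq> R" using mem by blast
        show "I \<subseteq> \<Union>C" using mem J0 by blast
        show "\<forall>x\<in>\<Union>C. \<forall>y\<in>\<Union>C. x + y \<in> \<Union>C"
        proof (intro ballI)
          fix x y assume "x \<in> \<Union>C" "y \<in> \<Union>C"
          then obtain J1 J2 where J: "J1 \<in> C" "J2 \<in> C" "x \<in> J1" "y \<in> J2" by blast
          show "x + y \<in> \<Union>C"
          proof (cases "J1 \<subseteq> J2")
            case True
            hence "x + y \<in> J2" using mem[OF J(2)] J by blast
            thus ?thesis using J(2) by blast
          next
            case False
            hence "J2 \<subseteq> J1" using ch[OF J(1,2)] by blast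
            hence "x + y \<in> J1" using mem[OF J(1)] J by blast
            thus ?thesis using J(1) by blast
          qed
        qed
        show "\<forall>r\<in>R. \<forall>x\<in>\<Union>C. r * x \<in> \<Union>C"
        proof (intro ballI)
          fix r x assume "r \<in> R" "x \<in> \<Union>C"
          then obtain J1 where "J1 \<in> C" "x \<in> J1" by blast
          thus "r * x \<in> \<Union>C" using mem \<open>r \<in> R\<close> by blast
        qed
        show "1 \<notin> \<Union>C" using mem by blast
      qed
      thus ?thesis by blast
    qed
  qed
  from Zorn_Lemma2[OF this] obtain P where P: "P \<in> Id" and Pmax: "\<And>X. X \<in> Id \<Longrightarrow> P \<subseteq> X \<Longrightarrow> X = P"
    by blast
  have PR: "P \<subseteq> R" and IP: "I \<subseteq> P" and Padd: "\<And>x y. x \<in> P \<Longrightarrow> y \<in> P \<Longrightarrow> x + y \<in> P"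
    and Pmul: "\<And>r x. r \<in> R \<Longrightarrow> x \<in> P \<Longrightarrow> r * x \<in> P" and P1: "1 \<notin> P"
    using P unfolding Id_def by blast+
  have P0: "0 \<in> P" using IP I(2) by blast
  have ext: "\<exists>p\<in>P. \<exists>r\<in>R. p + r * c = 1" if c: "c \<in> R" "c \<notin> P" for c
  proof (rule ccontr)
    assume no: "\<not> (\<exists>p\<in>P. \<exists>r\<in>R. p + r * c = 1)"
    define J where "J = {p + r * c | p r. p \<in> P \<and> r \<in> R}"
    have "J \<in> Id" unfolding Id_def
    proof (intro CollectI conjI)
      show "J \<subseteq> R" unfolding J_def using PR c(1) R by (auto intro: sr_add sr_mult)
      have PJ: "P \<subseteq> J"
      proof
        fix p assume "p \<in> P"
        hence "p = p + 0 * c \<and> p \<in> P \<and> 0 \<in> R" using sr_0[OF R] by simp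
        thus "p \<in> J" unfolding J_def by blast
      qed
      thus "I \<subseteq> J" using IP by blast
      show "\<forall>x\<in>J. \<forall>y\<in>J. x + y \<in> J"
      proof (intro ballI)
        fix x y assume "x \<in> J" "y \<in> J"
        then obtain p1 r1 p2 r2 where "x = p1 + r1 * c" "y = p2 + r2 * c" "p1 \<in> P" "r1 \<in> R" "p2 \<in> P" "r2 \<in> R"
          unfolding J_def by blast
        moreover have "p1 + r1 * c + (p2 + r2 * c) = (p1 + p2) + (r1 + r2) * c" by (simp add: algebra_simps)
        ultimately show "x + y \<in> J" unfolding J_def using Padd sr_add[OF R] by blast
      qed
      show "\<forall>s\<in>R. \<forall>x\<in>J. s * x \<in> J"
      proof (intro ballI)
        fix s x assume "s \<in> R" "x \<in> J"
        then obtain p1 r1 where "x = p1 + r1 * c" "p1 \<in> P" "r1 \<in> R" unfolding J_def by blast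
        moreover have "s * (p1 + r1 * c) = s * p1 + (s * r1) * c" by (simp add: algebra_simps)
        ultimately show "s * x \<in> J" unfolding J_def using Pmul sr_mult[OF R] \<open>s \<in> R\<close> by blast
      qed
      show "1 \<notin> J"
      proof
        assume "1 \<in> J"
        then obtain p r where "1 = p + r * c" "p \<in> P" "r \<in> R" unfolding J_def by blast
        thus False using no by metis
      qed
    qed
    moreover have "P \<subseteq> J"
    proof
      fix p assume "p \<in> P"
      hence "p = p + 0 * c \<and> p \<in> P \<and> 0 \<in> R" using sr_0[OF R] by simp
      thus "p \<in> J" unfolding J_def by blast
    qed
    ultimately have "J = P" using Pmax by blast
    moreover have "c \<in> J"
    proof -
      have "c = 0 + 1 * c \<and> 0 \<in> P \<and> 1 \<in> R" using P0 sr_1[OF R] by simp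
      thus ?thesis unfolding J_def by blast
    qed
    ultimately show False using c(2) by blast
  qed
  have prime: "a \<in> P \<or> b \<in> P" if ab: "a \<in> R" "b \<in> R" "a * b \<in> P" for a b
  proof (rule ccontr)
    assume "\<not> (a \<in> P \<or> b \<in> P)"
    then obtain p1 r1 p2 r2 where q: "p1 \<in> P" "r1 \<in> R" "p1 + r1 * a = 1" "p2 \<in> P" "r2 \<in> R" "p2 + r2 * b = 1"
      using ext ab by meson
    have "1 = (p1 + r1 * a) * (p2 + r2 * b)" using q by simp
    also have "\<dots> = (p2 + r2 * b) * p1 + (r1 * a) * p2 + (r1 * r2) * (a * b)" by (simp add: algebra_simps)
    also have "\<dots> \<in> P"
    proof -
      have "p2 + r2 * b \<in> R" "r1 * a \<in> R" "r1 * r2 \<in> R" using q ab R sr_1[OF R] by (auto intro: sr_add sr_mult subsetD[OF PR])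
      hence "(p2 + r2 * b) * p1 \<in> P" "(r1 * a) * p2 \<in> P" "(r1 * r2) * (a * b) \<in> P"
        using Pmul q(1,4) ab(3) by auto
      thus ?thesis using Padd by presburger
    qed
    finally show False using P1 by blast
  qed
  have "prime_ideal_of R P" unfolding prime_ideal_of_def
    using PR P1 sr_1[OF R] P0 Padd Pmul prime by blast
  thus ?thesis using IP by blast
qed

lemma supp_H:
  assumes R: "subring R" and T: "subring T" and RT: "R \<subseteq> T" and x: "x \<in> T" and y: "y \<in> S"
    and disj: "supp_quot R T R \<inter> supp_quot R S T = {}"
  shows "\<exists>a\<in>R. \<exists>b\<in>R. a + b = 1 \<and> a * x \<in> R \<and> b * y \<in> T"
proof (rule ccontr)
  assume ne: "\<not> ?thesis"
  define I where "I = {r1 + r2 | r1 r2. r1 \<in> R \<and> r1 * x \<in> R \<and> r2 \<in> R \<and> r2 * y \<in> T}"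
  have "I \<subseteq> R" unfolding I_def using R by (auto intro: sr_add)
  moreover have "0 \<in> I"
  proof -
    have "(0::'a) = 0 + 0 \<and> 0 \<in> R \<and> 0 * x \<in> R \<and> 0 * y \<in> T" using sr_0[OF R] sr_0[OF T] by simp
    thus ?thesis unfolding I_def by blast
  qed
  moreover have "\<forall>u\<in>I. \<forall>v\<in>I. u + v \<in> I"
  proof (intro ballI)
    fix u v assume "u \<in> I" "v \<in> I"
    then obtain r1 r2 s1 s2 where q: "u = r1 + r2" "v = s1 + s2" "r1 \<in> R" "r1 * x \<in> R" "r2 \<in> R" "r2 * y \<in> T"
      "s1 \<in> R" "s1 * x \<in> R" "s2 \<in> R" "s2 * y \<in> T" unfolding I_def by blast
    have "u + v = (r1 + s1) + (r2 + s2)" using q by (simp add: algebra_simps)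
    moreover have "(r1 + s1) * x = r1 * x + s1 * x" "(r2 + s2) * y = r2 * y + s2 * y" by (simp_all add: algebra_simps)
    moreover have "r1 + s1 \<in> R" "r1 * x + s1 * x \<in> R" "r2 + s2 \<in> R" "r2 * y + s2 * y \<in> T"
      using q R T by (auto intro: sr_add)
    ultimately have "u + v = (r1 + s1) + (r2 + s2) \<and> r1 + s1 \<in> R \<and> (r1 + s1) * x \<in> R \<and> r2 + s2 \<in> R \<and> (r2 + s2) * y \<in> T"
      by simp
    thus "u + v \<in> I" unfolding I_def by blast
  qed
  moreover have "\<forall>r\<in>R. \<forall>u\<in>I. r * u \<in> I"
  proof (intro ballI)
    fix r u assume r: "r \<in> R" and "u \<in> I"
    then obtain r1 r2 where q: "u = r1 + r2" "r1 \<in> R" "r1 * x \<in> R" "r2 \<in> R" "r2 * y \<in> T" unfolding I_def by blast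
    have "r * u = r * r1 + r * r2" using q by (simp add: algebra_simps)
    moreover have "(r * r1) * x = r * (r1 * x)" "(r * r2) * y = r * (r2 * y)" by (simp_all add: algebra_simps)
    moreover have "r \<in> T" using r RT by blast
    moreover have "r * r1 \<in> R" "r * (r1 * x) \<in> R" "r * r2 \<in> R" "r * (r2 * y) \<in> T"
      using q R T r \<open>r \<in> T\<close> by (auto intro: sr_mult)
    ultimately have "r * u = r * r1 + r * r2 \<and> r * r1 \<in> R \<and> (r * r1) * x \<in> R \<and> r * r2 \<in> R \<and> (r * r2) * y \<in> T"
      by (simp add: mult.assoc)
    thus "r * u \<in> I" unfolding I_def by blast
  qed
  moreover have "1 \<notin> I"
  proof
    assume "1 \<in> I"
    then obtain r1 r2 where q: "1 = r1 + r2" "r1 \<in> R" "r1 * x \<in> R" "r2 \<in> R" "r2 * y \<in> T"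
      unfolding I_def by blast
    hence "r1 + r2 = 1 \<and> r1 * x \<in> R \<and> r2 * y \<in> T" by simp
    thus False using ne q(2,4) by blast
  qed
  ultimately obtain P where P: "prime_ideal_of R P" "I \<subseteq> P" using exists_prime[OF R] by blast
  have "P \<in> supp_quot R T R" unfolding supp_quot_def
  proof (intro CollectI conjI bexI[of _ x] ballI)
    show "prime_ideal_of R P" by (rule P(1))
    show "x \<in> T" by (rule x)
    fix s assume s: "s \<in> R - P"
    show "s * x \<notin> R"
    proof
      assume "s * x \<in> R"
      hence "s = s + 0 \<and> s \<in> R \<and> s * x \<in> R \<and> 0 \<in> R \<and> 0 * y \<in> T" using s sr_0[OF R] sr_0[OF T] by simp
      hence "s \<in> I" unfolding I_def by blast
      thus False using P(2) s by blast
    qed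
  qed
  moreover have "P \<in> supp_quot R S T" unfolding supp_quot_def
  proof (intro CollectI conjI bexI[of _ y] ballI)
    show "prime_ideal_of R P" by (rule P(1))
    show "y \<in> S" by (rule y)
    fix s assume s: "s \<in> R - P"
    show "s * y \<notin> T"
    proof
      assume "s * y \<in> T"
      hence "s = 0 + s \<and> 0 \<in> R \<and> 0 * x \<in> R \<and> s \<in> R \<and> s * y \<in> T" using s sr_0[OF R] by simp
      hence "s \<in> I" unfolding I_def by blast
      thus False using P(2) s by blast
    qed
  qed
  ultimately show False using disj by blast
qed

lemma combine_inner:
  assumes R: "subring R" and T: "subring T" and RT: "R \<subseteq> T"
    and H: "\<forall>x\<in>T. \<forall>y\<in>S. \<exists>a\<in>R. \<exists>b\<in>R. a + b = 1 \<and> a * x \<in> R \<and> b * y \<in> T"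
    and x: "x \<in> T" and Y: "finite Y" "Y \<subseteq> S"
  shows "\<exists>a\<in>R. \<exists>b\<in>R. a + b = 1 \<and> a * x \<in> R \<and> (\<forall>y\<in>Y. b * y \<in> T)"
  using Y
proof (induction Y rule: finite_induct)
  case empty
  have "(0::'a) + 1 = 1 \<and> 0 * x \<in> R" using sr_0[OF R] by simp
  thus ?case using sr_0[OF R] sr_1[OF R] by blast
next
  case (insert y Y)
  then obtain a1 b1 where 1: "a1 \<in> R" "b1 \<in> R" "a1 + b1 = 1" "a1 * x \<in> R" "\<forall>y\<in>Y. b1 * y \<in> T" by auto
  obtain a2 b2 where 2: "a2 \<in> R" "b2 \<in> R" "a2 + b2 = 1" "a2 * x \<in> R" "b2 * y \<in> T"
    using H x insert.prems by blast
  have "a1 + b1 * a2 + b1 * b2 = 1" using 1 2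
    by (metis add.assoc distrib_left mult.right_neutral)
  moreover have "(a1 + b1 * a2) * x = a1 * x + b1 * (a2 * x)" by (simp add: algebra_simps)
  moreover have "a1 * x + b1 * (a2 * x) \<in> R" using 1 2 R by (auto intro: sr_add sr_mult)
  moreover have "\<forall>z\<in>insert y Y. (b1 * b2) * z \<in> T"
  proof
    fix z assume "z \<in> insert y Y"
    moreover have "(b1 * b2) * y = b1 * (b2 * y)" "\<And>z. (b1 * b2) * z = b2 * (b1 * z)" by (simp_all add: algebra_simps)
    moreover have "b1 \<in> T" "b2 \<in> T" using 1 2 RT by auto
    ultimately show "(b1 * b2) * z \<in> T"
    proof (elim insertE)
      assume "z = y" thus ?thesis using 2(5) \<open>b1 \<in> T\<close> T by (metis mult.assoc sr_mult)
    next
      assume zY: "z \<in> Y"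
      have "(b1 * b2) * z = b2 * (b1 * z)" by (simp add: algebra_simps)
      thus ?thesis using sr_mult[OF T \<open>b2 \<in> T\<close> bspec[OF 1(5) zY]] by metis
    qed
  qed
  moreover have "a1 + b1 * a2 \<in> R" "b1 * b2 \<in> R" using 1 2 R by (auto intro: sr_add sr_mult)
  ultimately show ?case by (metis add.assoc)
qed

lemma combine:
  assumes R: "subring R" and T: "subring T" and RT: "R \<subseteq> T"
    and H: "\<forall>x\<in>T. \<forall>y\<in>S. \<exists>a\<in>R. \<exists>b\<in>R. a + b = 1 \<and> a * x \<in> R \<and> b * y \<in> T"
    and X: "finite X" "X \<subseteq> T" and Y: "finite Y" "Y \<subseteq> S"
  shows "\<exists>a\<in>R. \<exists>b\<in>R. a + b = 1 \<and> (\<forall>x\<in>X. a * x \<in> R) \<and> (\<forall>y\<in>Y. b * y \<in> T)"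
  using X
proof (induction X rule: finite_induct)
  case empty
  have "(1::'a) + 0 = 1 \<and> (\<forall>y\<in>Y. 0 * y \<in> T)" using sr_0[OF T] by simp
  thus ?case using sr_0[OF R] sr_1[OF R] by blast
next
  case (insert x X)
  then obtain a1 b1 where 1: "a1 \<in> R" "b1 \<in> R" "a1 + b1 = 1" "\<forall>x\<in>X. a1 * x \<in> R" "\<forall>y\<in>Y. b1 * y \<in> T" by auto
  obtain a2 b2 where 2: "a2 \<in> R" "b2 \<in> R" "a2 + b2 = 1" "a2 * x \<in> R" "\<forall>y\<in>Y. b2 * y \<in> T"
    using combine_inner[OF R T RT H _ Y] insert.prems by blast
  have "a1 * a2 + (b1 + a1 * b2) = a1 * (a2 + b2) + b1" by (simp add: algebra_simps)
  hence "a1 * a2 + (b1 + a1 * b2) = 1" using 1(3) 2(3) by simp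
  moreover have "\<forall>z\<in>insert x X. (a1 * a2) * z \<in> R"
  proof
    fix z assume "z \<in> insert x X"
    moreover have "(a1 * a2) * x = a1 * (a2 * x)" "\<And>z. (a1 * a2) * z = a2 * (a1 * z)" by (simp_all add: algebra_simps)
    ultimately show "(a1 * a2) * z \<in> R"
    proof (elim insertE)
      assume "z = x" thus ?thesis using 2(4) 1(1) R by (metis mult.assoc sr_mult)
    next
      assume zX: "z \<in> X"
      have "(a1 * a2) * z = a2 * (a1 * z)" by (simp add: algebra_simps)
      thus ?thesis using sr_mult[OF R 2(1) bspec[OF 1(4) zX]] by metis
    qed
  qed
  moreover have "\<forall>y\<in>Y. (b1 + a1 * b2) * y \<in> T"
  proof
    fix y assume y: "y \<in> Y"
    have "(b1 + a1 * b2) * y = b1 * y + a1 * (b2 * y)" by (simp add: algebra_simps)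
    moreover have "a1 \<in> T" using 1 RT by auto
    ultimately show "(b1 + a1 * b2) * y \<in> T" using 1(5) 2(5) y T by (auto intro: sr_mult sr_add)
  qed
  moreover have "a1 * a2 \<in> R" "b1 + a1 * b2 \<in> R" using 1 2 R by (auto intro: sr_add sr_mult)
  ultimately show ?case by blast
qed

locale decomp =
  fixes R T U S :: "'a::comm_ring_1 set" and a b :: 'a
  assumes sR: "subring R" and sT: "subring T" and sU: "subring U" and sS: "subring S"
    and RT: "R \<subseteq> T" and TS: "T \<subseteq> S" and RU: "R \<subseteq> U" and US: "U \<subseteq> S"
    and aR: "a \<in> R" and bR: "b \<in> R" and ab: "a + b = 1"
    and hA: "\<And>t. t \<in> T \<Longrightarrow> \<exists>d. a ^ d * t \<in> R"
    and hB: "\<And>z. z \<in> U \<Longrightarrow> \<exists>n. b ^ n * z \<in> R"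
    and hS1: "\<And>y. y \<in> S \<Longrightarrow> \<exists>e. b ^ e * y \<in> T"
    and hS2: "\<And>y. y \<in> S \<Longrightarrow> \<exists>d. a ^ d * y \<in> U"
begin

lemma swap: "decomp R U T S b a"
  by (unfold_locales) (use sR sT sU sS RT TS RU US aR bR ab hA hB hS1 hS2 in \<open>auto simp: add.commute\<close>)

lemma splitw: "subring C \<Longrightarrow> R \<subseteq> C \<Longrightarrow> a ^ m * w \<in> C \<Longrightarrow> b ^ n * w \<in> C \<Longrightarrow> w \<in> C"
  using split_elem[OF sR aR bR ab] by blast

lemma Phi_interval:
  assumes "A \<in> interval R T" "B \<in> interval R U"
  shows "ringprod A B \<in> interval R S"
proof -
  have "R \<subseteq> A" "A \<subseteq> S" "B \<subseteq> S" using assms TS US by (auto simp: interval_iff)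
  thus ?thesis using ringprod_sub1[of A B] ringprod_least[OF sS, of A B] subring_ringprod[of A B]
    by (auto simp: interval_iff)
qed

lemma Phi_T:
  assumes A: "A \<in> interval R T" and B: "B \<in> interval R U"
  shows "ringprod A B \<inter> T = A"
proof
  have sA: "subring A" and RA: "R \<subseteq> A" and AT: "A \<subseteq> T" using A by (auto simp: interval_iff)
  have BU: "B \<subseteq> U" using B by (auto simp: interval_iff)
  show "ringprod A B \<inter> T \<subseteq> A"
  proof
    fix w assume w: "w \<in> ringprod A B \<inter> T"
    have bA: "b \<in> A" using bR RA by blast
    define Q where "Q = {w. \<exists>n. b ^ n * w \<in> A}"
    have sQ: "subring Q" unfolding Q_def by (rule mult_sat_subring[OF sA bA])
    have "A \<subseteq> Q"
    proof
      fix z assume "z \<in> A" hence "b ^ 0 * z \<in> A" by simp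
      thus "z \<in> Q" unfolding Q_def by blast
    qed
    moreover have "B \<subseteq> Q"
    proof
      fix z assume "z \<in> B" hence "z \<in> U" using BU by blast
      then obtain n where "b ^ n * z \<in> R" using hB by blast
      hence "b ^ n * z \<in> A" using RA by blast
      thus "z \<in> Q" unfolding Q_def by blast
    qed
    ultimately have "ringprod A B \<subseteq> Q" by (rule ringprod_least[OF sQ])
    then obtain n where n: "b ^ n * w \<in> A" using w unfolding Q_def by blast
    obtain d where "a ^ d * w \<in> R" using hA w by blast
    hence d: "a ^ d * w \<in> A" using RA by blast
    show "w \<in> A" by (rule splitw[OF sA RA d n])
  qed
  show "A \<subseteq> ringprod A B \<inter> T" using ringprod_sub1[of A B] AT by blast
qed

lemma Phi_U:
  assumes A: "A \<in> interval R T" and B: "B \<in> interval R U"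
  shows "ringprod A B \<inter> U = B"
  using decomp.Phi_T[OF swap B A] ringprod_comm[of A B] by simp

lemma int_T: "C \<in> interval R S \<Longrightarrow> C \<inter> T \<in> interval R T"
  using sr_Int[of _ T] sT RT by (auto simp: interval_iff)

lemma int_U: "C \<in> interval R S \<Longrightarrow> C \<inter> U \<in> interval R U"
  using sr_Int[of _ U] sU RU by (auto simp: interval_iff)

lemma decomp_C:
  assumes C: "C \<in> interval R S"
  shows "ringprod (C \<inter> T) (C \<inter> U) = C"
proof
  have sC: "subring C" and RC: "R \<subseteq> C" and CS: "C \<subseteq> S" using C by (auto simp: interval_iff)
  show "ringprod (C \<inter> T) (C \<inter> U) \<subseteq> C" by (rule ringprod_least[OF sC]) auto
  show "C \<subseteq> ringprod (C \<inter> T) (C \<inter> U)"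
  proof
    fix c assume c: "c \<in> C"
    define P where "P = ringprod (C \<inter> T) (C \<inter> U)"
    have sP: "subring P" unfolding P_def by (rule subring_ringprod)
    have RP: "R \<subseteq> P" unfolding P_def using ringprod_sub1[of "C \<inter> T" "C \<inter> U"] RC RT by blast
    obtain e where e: "b ^ e * c \<in> T" using hS1 c CS by blast
    have "b ^ e \<in> C" using sr_pow[OF sC] bR RC by blast
    hence "b ^ e * c \<in> C" using sr_mult[OF sC] c by blast
    hence "b ^ e * c \<in> P" unfolding P_def using e ringprod_sub1[of "C \<inter> T" "C \<inter> U"] by blast
    moreover obtain d where d: "a ^ d * c \<in> U" using hS2 c CS by blast
    have "a ^ d \<in> C" using sr_pow[OF sC] aR RC by blast
    hence "a ^ d * c \<in> C" using sr_mult[OF sC] c by blast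
    hence "a ^ d * c \<in> P" unfolding P_def using d ringprod_sub2[of "C \<inter> U" "C \<inter> T"] ringprod_sub2[of "C \<inter> T" "C \<inter> U"] by blast
    ultimately have "c \<in> P" using splitw[OF sP RP] by blast
    thus "c \<in> ringprod (C \<inter> T) (C \<inter> U)" unfolding P_def .
  qed
qed

lemma socle_sup:
  assumes "A \<in> interval R T"
  shows "A \<subseteq> socle A T" "socle A T \<in> interval R T"
  using socle_interval[of A T] assms sT by (auto simp: interval_iff)

lemma atom_caseT:
  assumes A: "A \<in> interval R T" and B: "B \<in> interval R U"
    and C: "C \<in> atoms (ringprod A B) S" and ne: "C \<inter> T \<noteq> A"
  shows "C \<subseteq> ringprod (socle A T) (socle B U)"
proof -
  define P where "P = ringprod A B"
  have Cint: "C \<in> interval P S" and mn: "minimal_ext P C" using C unfolding atoms_def P_def by auto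
  have PC: "P \<subset> C" and ivPC: "interval P C = {P, C}" using mn unfolding minimal_ext_def by auto
  have sA: "subring A" "R \<subseteq> A" "A \<subseteq> T" using A by (auto simp: interval_iff)
  have sB: "subring B" "R \<subseteq> B" "B \<subseteq> U" using B by (auto simp: interval_iff)
  have AP: "A \<subseteq> P" unfolding P_def by (rule ringprod_sub1)
  have BP: "B \<subseteq> P" unfolding P_def by (rule ringprod_sub2)
  have sC: "subring C" "C \<subseteq> S" using Cint by (auto simp: interval_iff)
  have CRS: "C \<in> interval R S" using sC PC AP sA(2) by (auto simp: interval_iff)
  define A' where "A' = C \<inter> T"
  have A'int: "A' \<in> interval R T" unfolding A'_def by (rule int_T[OF CRS])
  have AA': "A \<subseteq> A'" unfolding A'_def using AP PC sA(3) by blast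
  have BC: "B \<subseteq> C" using BP PC by blast
  have A'C: "A' \<subseteq> C" unfolding A'_def by blast
  define D where "D = ringprod A' B"
  have Dsub: "D \<subseteq> C" unfolding D_def by (rule ringprod_least[OF sC(1) A'C BC])
  have PD: "P \<subseteq> D" unfolding P_def D_def by (rule ringprod_mono[OF AA' subset_refl])
  have "D \<in> interval P C" using Dsub PD subring_ringprod[of A' B] unfolding D_def by (simp add: interval_iff)
  hence "D = P \<or> D = C" using ivPC by blast
  moreover have "D \<noteq> P"
  proof
    assume "D = P"
    hence "D \<inter> T = P \<inter> T" by simp
    hence "A' = A" unfolding D_def P_def using Phi_T[OF A'int B] Phi_T[OF A B] by simp
    thus False using ne unfolding A'_def by simp
  qed
  ultimately have DC: "D = C" by blast
  have "A' \<in> atoms A T"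
    unfolding atoms_def
  proof (intro CollectI conjI)
    show "A' \<in> interval A T" using A'int AA' by (auto simp: interval_iff)
    show "minimal_ext A A'"
      unfolding minimal_ext_def
    proof
      show "A \<subset> A'" using AA' ne unfolding A'_def by blast
      show "interval A A' = {A, A'}"
      proof
        show "interval A A' \<subseteq> {A, A'}"
        proof
          fix E assume E: "E \<in> interval A A'"
          have Eint: "E \<in> interval R T" using E A'int sA(2) by (auto simp: interval_iff)
          have AE: "A \<subseteq> E" and EA': "E \<subseteq> A'" using E by (auto simp: interval_iff)
          have "P \<subseteq> ringprod E B" unfolding P_def by (rule ringprod_mono[OF AE subset_refl])
          moreover have "ringprod E B \<subseteq> C" using ringprod_mono[OF EA' subset_refl, of B] DC unfolding D_def by blast
          ultimately have "ringprod E B \<in> interval P C" using subring_ringprod[of E B] by (simp add: interval_iff)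
          hence "ringprod E B = P \<or> ringprod E B = D" using ivPC DC by blast
          hence "ringprod E B \<inter> T = P \<inter> T \<or> ringprod E B \<inter> T = D \<inter> T" by blast
          hence "E = A \<or> E = A'" unfolding P_def D_def using Phi_T[OF Eint B] Phi_T[OF A B] Phi_T[OF A'int B] by simp
          thus "E \<in> {A, A'}" by blast
        qed
        show "{A, A'} \<subseteq> interval A A'" using sA A'int AA' by (auto simp: interval_iff)
      qed
    qed
  qed
  hence "A' \<subseteq> socle A T" by (rule atom_sub_socle)
  moreover have "B \<subseteq> socle B U" using decomp.socle_sup(1)[OF swap B] .
  ultimately have "ringprod A' B \<subseteq> ringprod (socle A T) (socle B U)" by (rule ringprod_mono)
  thus ?thesis using DC unfolding D_def by simp
qed

lemma atom_sub:
  assumes A: "A \<in> interval R T" and B: "B \<in> interval R U"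
    and C: "C \<in> atoms (ringprod A B) S"
  shows "C \<subseteq> ringprod (socle A T) (socle B U)"
proof (cases "C \<inter> T = A")
  case False thus ?thesis using atom_caseT[OF A B C] by blast
next
  case True
  have Cint: "C \<in> interval (ringprod A B) S" and mn: "minimal_ext (ringprod A B) C"
    using C unfolding atoms_def by auto
  have CRS: "C \<in> interval R S" using Cint A ringprod_sub1[of A B] by (auto simp: interval_iff)
  have "C \<inter> U \<noteq> B"
  proof
    assume "C \<inter> U = B"
    hence "C = ringprod A B" using decomp_C[OF CRS] True by simp
    thus False using mn unfolding minimal_ext_def by blast
  qed
  moreover have "C \<in> atoms (ringprod B A) S" using C ringprod_comm[of A B] by simp
  ultimately have "C \<subseteq> ringprod (socle B U) (socle A T)" using decomp.atom_caseT[OF swap B A] by blast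
  thus ?thesis using ringprod_comm by metis
qed

lemma atom_lift:
  assumes A: "A \<in> interval R T" and B: "B \<in> interval R U" and A': "A' \<in> atoms A T"
  shows "A' \<subseteq> socle (ringprod A B) S"
proof -
  define P where "P = ringprod A B"
  have A'iv: "A' \<in> interval A T" and mn: "minimal_ext A A'" using A' unfolding atoms_def by auto
  have AA': "A \<subset> A'" and ivAA': "interval A A' = {A, A'}" using mn unfolding minimal_ext_def by auto
  have sA: "subring A" "R \<subseteq> A" "A \<subseteq> T" using A by (auto simp: interval_iff)
  have sB: "subring B" "R \<subseteq> B" "B \<subseteq> U" using B by (auto simp: interval_iff)
  have A'int: "A' \<in> interval R T" using A'iv sA(2) by (auto simp: interval_iff)
  define D where "D = ringprod A' B"
  have PD: "P \<subseteq> D" unfolding P_def D_def using AA' by (intro ringprod_mono) auto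
  have PS: "P \<in> interval R S" unfolding P_def by (rule Phi_interval[OF A B])
  have DS: "D \<in> interval R S" unfolding D_def by (rule Phi_interval[OF A'int B])
  have PT: "P \<inter> T = A" unfolding P_def by (rule Phi_T[OF A B])
  have DT: "D \<inter> T = A'" unfolding D_def by (rule Phi_T[OF A'int B])
  have DU: "D \<inter> U = B" unfolding D_def by (rule Phi_U[OF A'int B])
  have "D \<in> atoms P S"
    unfolding atoms_def
  proof (intro CollectI conjI)
    show "D \<in> interval P S" using DS PD by (auto simp: interval_iff)
    show "minimal_ext P D"
      unfolding minimal_ext_def
    proof
      have "P \<noteq> D"
      proof
        assume "P = D" hence "A = A'" using PT DT by simp
        thus False using AA' by blast
      qed
      thus "P \<subset> D" using PD by blast
      show "interval P D = {P, D}"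
      proof
        show "interval P D \<subseteq> {P, D}"
        proof
          fix E assume E: "E \<in> interval P D"
          have PE: "P \<subseteq> E" and ED: "E \<subseteq> D" and sE: "subring E" using E by (auto simp: interval_iff)
          have ERS: "E \<in> interval R S" using PE ED PS DS sE by (auto simp: interval_iff)
          have "B \<subseteq> E \<inter> U" using PE sB(3) ringprod_sub2[of B A] unfolding P_def by blast
          moreover have "E \<inter> U \<subseteq> B" using ED DU by blast
          ultimately have EU: "E \<inter> U = B" by blast
          have AP: "A \<subseteq> P" unfolding P_def by (rule ringprod_sub1)
          have "A \<subseteq> E \<inter> T" using AP PE sA(3) by blast
          moreover have "E \<inter> T \<subseteq> A'" using ED DT by blast
          moreover have "subring (E \<inter> T)" by (rule sr_Int[OF sE sT])
          ultimately have "E \<inter> T \<in> interval A A'" by (simp add: interval_iff)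
          hence "E \<inter> T = A \<or> E \<inter> T = A'" using ivAA' by simp
          moreover have "E = ringprod (E \<inter> T) (E \<inter> U)" using decomp_C[OF ERS] by simp
          ultimately have "E = ringprod A B \<or> E = ringprod A' B" using EU by auto
          thus "E \<in> {P, D}" unfolding P_def D_def by blast
        qed
        show "{P, D} \<subseteq> interval P D" using PD PS DS by (auto simp: interval_iff)
      qed
    qed
  qed
  hence "D \<subseteq> socle P S" by (rule atom_sub_socle)
  moreover have "A' \<subseteq> D" unfolding D_def by (rule ringprod_sub1)
  ultimately show ?thesis unfolding P_def by blast
qed

lemma socle_Phi:
  assumes A: "A \<in> interval R T" and B: "B \<in> interval R U"
  shows "socle (ringprod A B) S = ringprod (socle A T) (socle B U)"
proof
  define P where "P = ringprod A B"
  have PS: "P \<in> interval R S" unfolding P_def by (rule Phi_interval[OF A B])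
  have sP: "subring P" "P \<subseteq> S" using PS by (auto simp: interval_iff)
  have sA: "A \<subseteq> socle A T" using socle_sup(1)[OF A] .
  have sB: "B \<subseteq> socle B U" using decomp.socle_sup(1)[OF swap B] .
  show "socle (ringprod A B) S \<subseteq> ringprod (socle A T) (socle B U)"
    unfolding socle_def[of "ringprod A B"]
  proof (rule ring_gen_least[OF subring_ringprod])
    have "ringprod A B \<subseteq> ringprod (socle A T) (socle B U)" by (rule ringprod_mono[OF sA sB])
    moreover have "\<Union>(atoms (ringprod A B) S) \<subseteq> ringprod (socle A T) (socle B U)"
      using atom_sub[OF A B] by blast
    ultimately show "ringprod A B \<union> \<Union>(atoms (ringprod A B) S) \<subseteq> ringprod (socle A T) (socle B U)"
      by blast
  qed
  have sL: "subring (socle P S)" unfolding socle_def by (rule subring_ring_gen)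
  have PL: "P \<subseteq> socle P S" using socle_interval[OF sP(1) sS sP(2)] by (auto simp: interval_iff)
  have "socle A T \<subseteq> socle P S"
    unfolding socle_def[of A]
  proof (rule ring_gen_least[OF sL])
    have "A \<subseteq> P" unfolding P_def by (rule ringprod_sub1)
    moreover have "\<Union>(atoms A T) \<subseteq> socle P S" using atom_lift[OF A B] unfolding P_def by blast
    ultimately show "A \<union> \<Union>(atoms A T) \<subseteq> socle P S" using PL by blast
  qed
  moreover have "socle B U \<subseteq> socle P S"
    unfolding socle_def[of B]
  proof (rule ring_gen_least[OF sL])
    have "B \<subseteq> P" unfolding P_def by (rule ringprod_sub2)
    moreover have "\<Union>(atoms B U) \<subseteq> socle P S"
      using decomp.atom_lift[OF swap B A] ringprod_comm[of B A] unfolding P_def by auto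
    ultimately show "B \<union> \<Union>(atoms B U) \<subseteq> socle P S" using PL by blast
  qed
  ultimately show "ringprod (socle A T) (socle B U) \<subseteq> socle (ringprod A B) S"
    unfolding P_def by (rule ringprod_least[OF sL[unfolded P_def]])
qed

lemma loewy_Phi: "loewy R S i = ringprod (loewy R T i) (loewy R U i)"
proof (induction i)
  case 0 thus ?case using ringprod_self[OF sR] by simp
next
  case (Suc i)
  have RS: "R \<subseteq> S" using RT TS by blast
  have Ti: "loewy R T i \<in> interval R T" by (rule loewy_interval[OF sR sT RT])
  have Ui: "loewy R U i \<in> interval R U" by (rule loewy_interval[OF sR sU RU])
  have "loewy R S (Suc i) = socle (loewy R S i) S" by (rule loewy_Suc'[OF sR sS RS])
  also have "\<dots> = ringprod (socle (loewy R T i) T) (socle (loewy R U i) U)"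
    using Suc socle_Phi[OF Ti Ui] by simp
  also have "\<dots> = ringprod (loewy R T (Suc i)) (loewy R U (Suc i))"
    using loewy_Suc'[OF sR sT RT] loewy_Suc'[OF sR sU RU] by simp
  finally show ?case .
qed

lemma loewy_top_iff: "loewy R S k = S \<longleftrightarrow> loewy R T k = T \<and> loewy R U k = U"
proof
  have Tk: "loewy R T k \<in> interval R T" by (rule loewy_interval[OF sR sT RT])
  have Uk: "loewy R U k \<in> interval R U" by (rule loewy_interval[OF sR sU RU])
  {
    assume "loewy R S k = S"
    hence eq: "ringprod (loewy R T k) (loewy R U k) = S" using loewy_Phi by simp
    have "loewy R T k = S \<inter> T" using Phi_T[OF Tk Uk] eq by simp
    moreover have "loewy R U k = S \<inter> U" using Phi_U[OF Tk Uk] eq by simp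
    ultimately show "loewy R T k = T \<and> loewy R U k = U" using TS US by blast
  }
  {
    assume "loewy R T k = T \<and> loewy R U k = U"
    moreover have "S \<in> interval R S" using sS RT TS by (auto simp: interval_iff)
    ultimately show "loewy R S k = S" using loewy_Phi decomp_C[of S] TS US
      by (metis inf.absorb_iff2)
  }
qed

end

theorem proposition8p12:
  fixes R S T :: "'a::comm_ring_1 set"
  assumes "subring R" and "subring S" and "R \<subset> S"
    and "FCP R S"
    and "T \<in> interval R S" and "T \<noteq> R" and "T \<noteq> S"
    and "supp_quot R T R \<inter> supp_quot R S T = {}"
  shows "(\<exists>!U. U \<in> interval R S \<and> T \<inter> U = R \<and> ringprod T U = S)
       \<and> (\<forall>U. U \<in> interval R S \<and> T \<inter> U = R \<and> ringprod T U = S \<longrightarrow>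
             (\<forall>i \<le> loewy_length R S. loewy R S i = ringprod (loewy R T i) (loewy R U i))
           \<and> loewy_length R S = max (loewy_length R T) (loewy_length R U))"
proof -
  note sR = assms(1) and sS = assms(2)
  have sT: "subring T" and RT: "R \<subseteq> T" and TS: "T \<subseteq> S" using assms(5) by (auto simp: interval_iff)
  have RS: "R \<subseteq> S" using assms(3) by blast
  have Rint: "R \<in> interval R S" using sR RS by (simp add: interval_iff)
  have Sint: "S \<in> interval T S" using sS TS by (simp add: interval_iff)
  obtain X where X: "finite X" "X \<subseteq> T" "ring_gen (R \<union> X) = T"
    using fcp_fin_gen[OF assms(4) Rint assms(5) sS] by blast
  obtain Y where Y: "finite Y" "Y \<subseteq> S" "ring_gen (T \<union> Y) = S"
    using fcp_fin_gen[OF assms(4) assms(5) Sint sS] by blast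
  have H: "\<forall>x\<in>T. \<forall>y\<in>S. \<exists>a\<in>R. \<exists>b\<in>R. a + b = 1 \<and> a * x \<in> R \<and> b * y \<in> T"
    using supp_H[OF sR sT RT _ _ assms(8)] by blast
  obtain a b where aR: "a \<in> R" and bR: "b \<in> R" and ab: "a + b = 1"
    and aX: "\<forall>x\<in>X. a * x \<in> R" and bY: "\<forall>y\<in>Y. b * y \<in> T"
    using combine[OF sR sT RT H X(1,2) Y(1,2)] by blast
  have hA: "\<exists>d. a ^ d * t \<in> R" if t: "t \<in> T" for t
  proof -
    define Q where "Q = {w. \<exists>n. a ^ n * w \<in> R}"
    have sQ: "subring Q" unfolding Q_def by (rule mult_sat_subring[OF sR aR])
    have "R \<subseteq> Q"
    proof
      fix z assume "z \<in> R" hence "a ^ 0 * z \<in> R" by simp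
      thus "z \<in> Q" unfolding Q_def by blast
    qed
    moreover have "X \<subseteq> Q"
    proof
      fix z assume "z \<in> X" hence "a ^ 1 * z \<in> R" using aX by simp
      thus "z \<in> Q" unfolding Q_def by blast
    qed
    ultimately have "ring_gen (R \<union> X) \<subseteq> Q" using ring_gen_least[OF sQ, of "R \<union> X"] by blast
    thus ?thesis using t X(3) unfolding Q_def by blast
  qed
  have bT: "b \<in> T" using bR RT by blast
  have hS1: "\<exists>e. b ^ e * y \<in> T" if y: "y \<in> S" for y
  proof -
    define Q where "Q = {w. \<exists>n. b ^ n * w \<in> T}"
    have sQ: "subring Q" unfolding Q_def by (rule mult_sat_subring[OF sT bT])
    have "T \<subseteq> Q"
    proof
      fix z assume "z \<in> T" hence "b ^ 0 * z \<in> T" by simp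
      thus "z \<in> Q" unfolding Q_def by blast
    qed
    moreover have "Y \<subseteq> Q"
    proof
      fix z assume "z \<in> Y" hence "b ^ 1 * z \<in> T" using bY by simp
      thus "z \<in> Q" unfolding Q_def by blast
    qed
    ultimately have "ring_gen (T \<union> Y) \<subseteq> Q" using ring_gen_least[OF sQ, of "T \<union> Y"] by blast
    thus ?thesis using y Y(3) unfolding Q_def by blast
  qed
  have comp: "decomp R T U S a b" if U: "U \<in> interval R S" "T \<inter> U = R" "ringprod T U = S" for U
  proof -
    have sU: "subring U" and RU: "R \<subseteq> U" and US: "U \<subseteq> S" using U(1) by (auto simp: interval_iff)
    have hB: "\<exists>n. b ^ n * z \<in> R" if z: "z \<in> U" for z
    proof -
      obtain e where e: "b ^ e * z \<in> T" using hS1 z US by blast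
      have "b ^ e \<in> U" using sr_pow[OF sU] bR RU by blast
      hence "b ^ e * z \<in> U" using sr_mult[OF sU] z by blast
      thus ?thesis using e U(2) by blast
    qed
    have aU: "a \<in> U" using aR RU by blast
    have hS2: "\<exists>d. a ^ d * y \<in> U" if y: "y \<in> S" for y
    proof -
      define Q where "Q = {w. \<exists>n. a ^ n * w \<in> U}"
      have sQ: "subring Q" unfolding Q_def by (rule mult_sat_subring[OF sU aU])
      have "T \<subseteq> Q"
      proof
        fix z assume "z \<in> T"
        then obtain d where "a ^ d * z \<in> R" using hA by blast
        hence "a ^ d * z \<in> U" using RU by blast
        thus "z \<in> Q" unfolding Q_def by blast
      qed
      moreover have "U \<subseteq> Q"
      proof
        fix z assume "z \<in> U" hence "a ^ 0 * z \<in> U" by simp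
        thus "z \<in> Q" unfolding Q_def by blast
      qed
      ultimately have "ringprod T U \<subseteq> Q" by (rule ringprod_least[OF sQ])
      thus ?thesis using y U(3) unfolding Q_def by blast
    qed
    show ?thesis
      by unfold_locales (use sR sT sU sS RT TS RU US aR bR ab hA hB hS1 hS2 in auto)
  qed
  define U0 where "U0 = {z \<in> S. \<exists>n. b ^ n * z \<in> R}"
  have U0eq: "U0 = S \<inter> {w. \<exists>n. b ^ n * w \<in> R}" unfolding U0_def by blast
  have sU0: "subring U0" unfolding U0eq by (rule sr_Int[OF sS mult_sat_subring[OF sR bR]])
  have RU0: "R \<subseteq> U0"
  proof
    fix z assume z: "z \<in> R" hence "b ^ 0 * z \<in> R" by simp
    thus "z \<in> U0" unfolding U0_def using z RS by blast
  qed
  have U0S: "U0 \<subseteq> S" unfolding U0_def by blast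
  have U0int: "U0 \<in> interval R S" using sU0 RU0 U0S by (simp add: interval_iff)
  have TU0: "T \<inter> U0 = R"
  proof
    show "T \<inter> U0 \<subseteq> R"
    proof
      fix z assume z: "z \<in> T \<inter> U0"
      obtain d where d: "a ^ d * z \<in> R" using hA z by blast
      obtain n where n: "b ^ n * z \<in> R" using z unfolding U0_def by blast
      show "z \<in> R" by (rule split_elem[OF sR aR bR ab sR subset_refl d n])
    qed
    show "R \<subseteq> T \<inter> U0" using RT RU0 by blast
  qed
  have PU0: "ringprod T U0 = S"
  proof
    show "ringprod T U0 \<subseteq> S" by (rule ringprod_least[OF sS TS U0S])
    show "S \<subseteq> ringprod T U0"
    proof
      fix y assume y: "y \<in> S"
      obtain e where e: "b ^ e * y \<in> T" using hS1 y by blast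
      obtain d where d: "a ^ d * (b ^ e * y) \<in> R" using hA e by blast
      have "a ^ d \<in> S" using sr_pow[OF sS] aR RS by blast
      hence "a ^ d * y \<in> S" using sr_mult[OF sS] y by blast
      moreover have "b ^ e * (a ^ d * y) = a ^ d * (b ^ e * y)" by (simp add: algebra_simps)
      ultimately have "a ^ d * y \<in> U0" unfolding U0_def using d by (metis (mono_tags, lifting) mem_Collect_eq)
      hence 1: "a ^ d * y \<in> ringprod T U0" using ringprod_sub2[of U0 T] by blast
      have 2: "b ^ e * y \<in> ringprod T U0" using e ringprod_sub1[of T U0] by blast
      have "R \<subseteq> ringprod T U0" using RT ringprod_sub1[of T U0] by blast
      thus "y \<in> ringprod T U0" using split_elem[OF sR aR bR ab subring_ringprod _ 1 2] by blast
    qed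
  qed
  have uniq: "U = U0" if U: "U \<in> interval R S" "T \<inter> U = R" "ringprod T U = S" for U
  proof -
    interpret d: decomp R T U S a b by (rule comp[OF U])
    show ?thesis
    proof
      show "U \<subseteq> U0"
      proof
        fix z assume z: "z \<in> U"
        then obtain n where "b ^ n * z \<in> R" using d.hB by blast
        thus "z \<in> U0" unfolding U0_def using z d.US by blast
      qed
      show "U0 \<subseteq> U"
      proof
        fix z assume z: "z \<in> U0"
        then obtain n where n: "b ^ n * z \<in> R" unfolding U0_def by blast
        hence n': "b ^ n * z \<in> U" using d.RU by blast
        obtain dd where dd: "a ^ dd * z \<in> U" using d.hS2 z U0S by blast
        show "z \<in> U" by (rule split_elem[OF sR aR bR ab d.sU d.RU dd n'])
      qed
    qed
  qed
  have part1: "\<exists>!U. U \<in> interval R S \<and> T \<inter> U = R \<and> ringprod T U = S"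
  proof (rule ex1I[of _ U0])
    show "U0 \<in> interval R S \<and> T \<inter> U0 = R \<and> ringprod T U0 = S" using U0int TU0 PU0 by blast
    fix U assume "U \<in> interval R S \<and> T \<inter> U = R \<and> ringprod T U = S"
    thus "U = U0" using uniq by blast
  qed
  have part2: "(\<forall>i \<le> loewy_length R S. loewy R S i = ringprod (loewy R T i) (loewy R U i))
           \<and> loewy_length R S = max (loewy_length R T) (loewy_length R U)"
    if U: "U \<in> interval R S \<and> T \<inter> U = R \<and> ringprod T U = S" for U
  proof -
    interpret d: decomp R T U S a b using comp U by blast
    have A1: "\<forall>i \<le> loewy_length R S. loewy R S i = ringprod (loewy R T i) (loewy R U i)"
      using d.loewy_Phi by blast
    have "interval R T \<subseteq> interval R S" using TS unfolding interval_def by blast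
    hence fT: "FCP R T" by (rule fcp_sub[OF assms(4)])
    have "interval R U \<subseteq> interval R S" using d.US unfolding interval_def by blast
    hence fU: "FCP R U" by (rule fcp_sub[OF assms(4)])
    obtain kT where kT: "loewy R T kT = T" using loewy_reaches[OF fT sR sT RT] by blast
    obtain kU where kU: "loewy R U kU = U" using loewy_reaches[OF fU sR d.sU d.RU] by blast
    define m where "m = loewy_length R T"
    define r where "r = loewy_length R U"
    have m: "loewy R T m = T" unfolding m_def loewy_length_def by (rule LeastI[of _ kT]) (rule kT)
    have r: "loewy R U r = U" unfolding r_def loewy_length_def by (rule LeastI[of _ kU]) (rule kU)
    have mle: "m \<le> k" if "loewy R T k = T" for k
      unfolding m_def loewy_length_def using that by (rule Least_le)
    have rle: "r \<le> k" if "loewy R U k = U" for k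
      unfolding r_def loewy_length_def using that by (rule Least_le)
    have "loewy_length R S = (LEAST k. loewy R S k = S)" by (simp add: loewy_length_def)
    also have "\<dots> = max m r"
    proof (rule Least_equality)
      have "loewy R T (max m r) = T" using loewy_top_mono[OF m] by simp
      moreover have "loewy R U (max m r) = U" using loewy_top_mono[OF r] by simp
      ultimately show "loewy R S (max m r) = S" using d.loewy_top_iff by blast
      fix k assume "loewy R S k = S"
      hence "loewy R T k = T" "loewy R U k = U" using d.loewy_top_iff by blast+
      thus "max m r \<le> k" using mle rle by simp
    qed
    finally show ?thesis using A1 unfolding m_def r_def by blast
  qed
  show ?thesis using part1 part2 by blast
qed

end
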